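(* Let $(\mathbf x,\mathbf p,\mu)$ be a deterministic TFM that is 2-user-friendly and satisfies weak UIC and $2$-weak-SCP. Then there exist a bid vector $\mathbf b=(b_1,\dots,b_m)$ and two distinct users $i,j$ with $x_i(\mathbf b)=x_j(\mathbf b)=1$, $b_i>p_i(\mathbf b)$ and $b_j>p_j(\mathbf b)$.
   Context: Setting (TFM). Each user $i$ has a true value $v_i\ge0$ and submits a single bid $b_i\ge0$; $\mathbf b=(b_1,\dots,b_m)$. A TFM has an inclusion rule (run by the miner, choosing at most $B$ bids) and confirmation, payment, miner-revenue rules (run by the blockchain on included bids); the mechanism treats users symmetrically. Composing the honest inclusion rule with the others gives deterministic $(\mathbf x,\mathbf p,\mu)$: $x_i(\mathbf b)\in\{0,1\}$ indicates confirmation, $p_i(\mathbf b)\le b_i$ the payment ($0$ if unconfirmed), $\mu(\mathbf b)$ the miner revenue. The TFM is 2-user-friendly if there exist $\mathbf b$ and $i\ne j$ with $x_i(\mathbf b)=x_j(\mathbf b)=1$. Strategic players (a user, the miner, or the miner with some users) may bid untruthfully after seeing all bids, inject fake bids (true value $0$), and (if the miner is involved) include any at most $B$ available bids. Weak ($1$-strict) utility: miner revenue (if the miner is in the player) plus $v-p$ for each confirmed transaction of the player (true value $v$, payment $p$), minus $(b-v)$ for each unconfirmed transaction of the player with bid $b>v$. Weak UIC: with an honest miner, each user's weak utility is maximized by truthful bidding without fake bids, whatever the other bids. $c$-weak-SCP: for every coalition of the miner with between $1$ and $c$ users, joint weak utility is maximized by truthful bidding and honest miner behavior, whatever the other bids.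 *)

theory Defs
  imports Complex_Main "HOL-Combinatorics.Permutations"
begin

text \<open>A bid vector is a list of reals; user identities are list positions.
  A TFM consists of an inclusion rule Inc (run by the miner; returns a set of
  positions of the bid vector), and confirmation / payment / miner-revenue rules
  Conf, Pay, Rev run by the blockchain on the list of included bids
  (Conf returns positions in the included list, Pay gives the payment of a position
  in the included list, Rev the miner revenue).\<close>

definition nonneg :: "real list \<Rightarrow> bool" where
  "nonneg b \<longleftrightarrow> (\<forall>x\<in>set b. x \<ge> 0)"

definition valid_incl :: "nat \<Rightarrow> real list \<Rightarrow> nat set \<Rightarrow> bool" where
  "valid_incl B b S \<longleftrightarrow> S \<subseteq> {..<length b} \<and> card S \<le> B"

definition included_bids :: "real list \<Rightarrow> nat set \<Rightarrow> real list" where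
  "included_bids b S = map (\<lambda>i. b ! i) (sorted_list_of_set S)"

definition pos :: "nat set \<Rightarrow> nat \<Rightarrow> nat" where
  "pos S i = card {j\<in>S. j < i}"

definition confirmed ::
  "(real list \<Rightarrow> nat set) \<Rightarrow> real list \<Rightarrow> nat set \<Rightarrow> nat \<Rightarrow> bool" where
  "confirmed Conf b S i \<longleftrightarrow> i \<in> S \<and> pos S i \<in> Conf (included_bids b S)"

definition payment ::
  "(real list \<Rightarrow> nat set) \<Rightarrow> (real list \<Rightarrow> nat \<Rightarrow> real) \<Rightarrow> real list \<Rightarrow> nat set \<Rightarrow> nat \<Rightarrow> real" where
  "payment Conf Pay b S i =
     (if confirmed Conf b S i then Pay (included_bids b S) (pos S i) else 0)"

definition revenue :: "(real list \<Rightarrow> real) \<Rightarrow> real list \<Rightarrow> nat set \<Rightarrow> real" where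
  "revenue Rev b S = Rev (included_bids b S)"

definition xh where "xh Inc Conf b i = confirmed Conf b (Inc b) i"
definition ph where "ph Inc Conf Pay b i = payment Conf Pay b (Inc b) i"
definition muh where "muh Inc Rev b = revenue Rev b (Inc b)"

text \<open>Well-formedness of a TFM with block size B: the honest inclusion rule chooses
  at most B bids; the honest payment never exceeds the bid; the blockchain rules treat
  users symmetrically (permuting the included bids permutes the outcome).\<close>
definition is_TFM ::
  "nat \<Rightarrow> (real list \<Rightarrow> nat set) \<Rightarrow> (real list \<Rightarrow> nat set) \<Rightarrow> (real list \<Rightarrow> nat \<Rightarrow> real)
     \<Rightarrow> (real list \<Rightarrow> real) \<Rightarrow> bool" where
  "is_TFM B Inc Conf Pay Rev \<longleftrightarrow>
     (\<forall>b. nonneg b \<longrightarrow> valid_incl B b (Inc b)) \<and>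
     (\<forall>b i. nonneg b \<longrightarrow> i < length b \<longrightarrow> ph Inc Conf Pay b i \<le> b ! i) \<and>
     (\<forall>c \<pi>. nonneg c \<longrightarrow> \<pi> permutes {..<length c} \<longrightarrow>
        (let c' = map (\<lambda>k. c ! \<pi> k) [0..<length c] in
          Rev c' = Rev c \<and>
          (\<forall>k<length c. (k \<in> Conf c' \<longleftrightarrow> \<pi> k \<in> Conf c) \<and>
                         (k \<in> Conf c' \<longrightarrow> Pay c' k = Pay c (\<pi> k)))))"

definition two_user_friendly where
  "two_user_friendly Inc Conf \<longleftrightarrow>
     (\<exists>b i j. nonneg b \<and> i < length b \<and> j < length b \<and> i \<noteq> j \<and>
              xh Inc Conf b i \<and> xh Inc Conf b j)"

text \<open>A deviation of coalition K (set of positions of the true bid vector b, whose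
  entries are the true values) to bid vector b': the original users are embedded
  order-preservingly by sigma, non-coalition users keep their bids, coalition users may
  change their bids, and all positions of b' outside the image of sigma are fake bids
  (true value 0) injected by the strategic player.\<close>
definition deviation :: "real list \<Rightarrow> nat set \<Rightarrow> real list \<Rightarrow> (nat \<Rightarrow> nat) \<Rightarrow> bool" where
  "deviation b K b' \<sigma> \<longleftrightarrow> nonneg b' \<and> strict_mono_on {..<length b} \<sigma> \<and>
     \<sigma> ` {..<length b} \<subseteq> {..<length b'} \<and>
     (\<forall>i<length b. i \<notin> K \<longrightarrow> b' ! (\<sigma> i) = b ! i)"

definition tx_util :: "real \<Rightarrow> real \<Rightarrow> bool \<Rightarrow> real \<Rightarrow> real" where
  "tx_util v bid conf p = (if conf then v - p else if bid > v then - (bid - v) else 0)"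

definition users_util ::
  "(real list \<Rightarrow> nat set) \<Rightarrow> (real list \<Rightarrow> nat \<Rightarrow> real) \<Rightarrow> real list \<Rightarrow> nat set
     \<Rightarrow> real list \<Rightarrow> (nat \<Rightarrow> nat) \<Rightarrow> nat set \<Rightarrow> real" where
  "users_util Conf Pay b K b' \<sigma> S =
     (\<Sum>i\<in>K. tx_util (b ! i) (b' ! \<sigma> i) (confirmed Conf b' S (\<sigma> i)) (payment Conf Pay b' S (\<sigma> i)))
   + (\<Sum>j\<in>{..<length b'} - \<sigma> ` {..<length b}.
        tx_util 0 (b' ! j) (confirmed Conf b' S j) (payment Conf Pay b' S j))"

definition weak_UIC where
  "weak_UIC Inc Conf Pay \<longleftrightarrow>
     (\<forall>b i b' \<sigma>. nonneg b \<longrightarrow> i < length b \<longrightarrow> deviation b {i} b' \<sigma> \<longrightarrow>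
        users_util Conf Pay b {i} b' \<sigma> (Inc b') \<le> users_util Conf Pay b {i} b id (Inc b))"

definition weak_SCP where
  "weak_SCP c B Inc Conf Pay Rev \<longleftrightarrow>
     (\<forall>b K b' \<sigma> S. nonneg b \<longrightarrow> K \<subseteq> {..<length b} \<longrightarrow> 1 \<le> card K \<longrightarrow> card K \<le> c \<longrightarrow>
        deviation b K b' \<sigma> \<longrightarrow> valid_incl B b' S \<longrightarrow>
        revenue Rev b' S + users_util Conf Pay b K b' \<sigma> S
          \<le> revenue Rev b (Inc b) + users_util Conf Pay b K b id (Inc b))"

end

theory Submission
  imports Defs
begin

lemma nonneg_upd1: "nonneg c \<Longrightarrow> x \<ge> 0 \<Longrightarrow> nonneg (c[k := x])"
proof -
  assume a: "nonneg c" "x \<ge> 0"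
  have "set (c[k := x]) \<subseteq> insert x (set c)" by (rule set_update_subset_insert)
  then show ?thesis using a unfolding nonneg_def by blast
qed

lemma lin:
  fixes R R2 R12 X Y Z U bi bj pi pj :: real
  assumes "R + (bi+1-pi) + (bj+1-pj) \<le> R12 + X + U"
    and "R2 + Z + (Y - 1) \<le> R + (bi - pi) + (bj - pj)"
    and "R12 + (X - 1) \<le> R2 + Z"
    and "bj+1-pj \<le> Y" and "pj \<le> bj"
  shows "1 \<le> U"
  using assms by linarith

lemma scp_inst:
  assumes tfm: "is_TFM B Inc Conf Pay Rev" and scp: "weak_SCP 2 B Inc Conf Pay Rev"
    and nv: "nonneg v" and nw: "nonneg w" and len: "length w = length v"
    and K: "K \<subseteq> {..<length v}" "1 \<le> card K" "card K \<le> 2"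
    and same: "\<forall>k<length v. k \<notin> K \<longrightarrow> w ! k = v ! k"
  shows "revenue Rev w (Inc w) + (\<Sum>k\<in>K. tx_util (v!k) (w!k) (xh Inc Conf w k) (ph Inc Conf Pay w k))
     \<le> revenue Rev v (Inc v) + (\<Sum>k\<in>K. tx_util (v!k) (v!k) (xh Inc Conf v k) (ph Inc Conf Pay v k))"
proof -
  have dev: "deviation v K w id" unfolding deviation_def using nw len same
    by (auto simp: strict_mono_on_def)
  have vi: "valid_incl B w (Inc w)"
    using conjunct1[OF tfm[unfolded is_TFM_def], rule_format, OF nw] .
  have "revenue Rev w (Inc w) + users_util Conf Pay v K w id (Inc w)
          \<le> revenue Rev v (Inc v) + users_util Conf Pay v K v id (Inc v)"
    using scp[unfolded weak_SCP_def, rule_format, OF nv K dev vi] .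
  then show ?thesis unfolding users_util_def xh_def ph_def using len by simp
qed

lemma uic_inst:
  assumes uic: "weak_UIC Inc Conf Pay"
    and nv: "nonneg v" and nw: "nonneg w" and len: "length w = length v"
    and i: "i < length v"
    and same: "\<forall>k<length v. k \<noteq> i \<longrightarrow> w ! k = v ! k"
  shows "tx_util (v!i) (w!i) (xh Inc Conf w i) (ph Inc Conf Pay w i)
     \<le> tx_util (v!i) (v!i) (xh Inc Conf v i) (ph Inc Conf Pay v i)"
proof -
  have dev: "deviation v {i} w id" unfolding deviation_def using nw len same
    by (auto simp: strict_mono_on_def)
  have "users_util Conf Pay v {i} w id (Inc w) \<le> users_util Conf Pay v {i} v id (Inc v)"
    using uic[unfolded weak_UIC_def, rule_format, OF nv i dev] .
  then show ?thesis unfolding users_util_def xh_def ph_def using len by simp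
qed

lemma key:
  assumes tfm: "is_TFM B Inc Conf Pay Rev" and uic: "weak_UIC Inc Conf Pay"
    and scp: "weak_SCP 2 B Inc Conf Pay Rev"
    and nb: "nonneg b" and i: "i < length b" and j: "j < length b" and ij: "i \<noteq> j"
    and xi: "xh Inc Conf b i" and xj: "xh Inc Conf b j"
  shows "xh Inc Conf (b[i := b!i+1, j := b!j+1]) j \<and>
         ph Inc Conf Pay (b[i := b!i+1, j := b!j+1]) j < (b[i := b!i+1, j := b!j+1]) ! j"
proof -
  define b2 where "b2 = b[j := b!j+1]"
  define b12 where "b12 = b[i := b!i+1, j := b!j+1]"
  have bi0: "b!i \<ge> 0" and bj0: "b!j \<ge> 0" using nb i j unfolding nonneg_def by auto
  have n2: "nonneg b2" unfolding b2_def using nonneg_upd1 nb bj0 by simp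
  have n12: "nonneg b12" unfolding b12_def using nonneg_upd1 nb bi0 bj0 by simp
  have pj: "ph Inc Conf Pay b j \<le> b!j" using tfm nb j unfolding is_TFM_def by blast
  have pi: "ph Inc Conf Pay b i \<le> b!i" using tfm nb i unfolding is_TFM_def by blast
  have b2i: "b2!i = b!i" and b2j: "b2!j = b!j+1" and l2: "length b2 = length b"
    unfolding b2_def using ij j by auto
  have b12i: "b12!i = b!i+1" and b12j: "b12!j = b!j+1" and l12: "length b12 = length b"
    unfolding b12_def using ij i j by auto
  have A: "tx_util (b2!j) (b!j) (xh Inc Conf b j) (ph Inc Conf Pay b j)
     \<le> tx_util (b2!j) (b2!j) (xh Inc Conf b2 j) (ph Inc Conf Pay b2 j)"
    by (rule uic_inst[OF uic n2 nb]) (auto simp: l2 j b2_def)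
  have KB: "{i,j} \<subseteq> {..<length b12}" "1 \<le> card {i,j}" "card {i,j} \<le> (2::nat)"
    using i j ij l12 by auto
  have B: "revenue Rev b (Inc b) + (\<Sum>k\<in>{i,j}. tx_util (b12!k) (b!k) (xh Inc Conf b k) (ph Inc Conf Pay b k))
     \<le> revenue Rev b12 (Inc b12) + (\<Sum>k\<in>{i,j}. tx_util (b12!k) (b12!k) (xh Inc Conf b12 k) (ph Inc Conf Pay b12 k))"
    by (rule scp_inst[OF tfm scp n12 nb _ KB]) (auto simp: l12 b12_def)
  have KC: "{i,j} \<subseteq> {..<length b}" "1 \<le> card {i,j}" "card {i,j} \<le> (2::nat)"
    using i j ij by auto
  have C: "revenue Rev b2 (Inc b2) + (\<Sum>k\<in>{i,j}. tx_util (b!k) (b2!k) (xh Inc Conf b2 k) (ph Inc Conf Pay b2 k))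
     \<le> revenue Rev b (Inc b) + (\<Sum>k\<in>{i,j}. tx_util (b!k) (b!k) (xh Inc Conf b k) (ph Inc Conf Pay b k))"
    by (rule scp_inst[OF tfm scp nb n2 _ KC]) (auto simp: l2 b2_def)
  have KD: "{i} \<subseteq> {..<length b2}" "1 \<le> card {i}" "card {i} \<le> (2::nat)"
    using i l2 by auto
  have D: "revenue Rev b12 (Inc b12) + (\<Sum>k\<in>{i}. tx_util (b2!k) (b12!k) (xh Inc Conf b12 k) (ph Inc Conf Pay b12 k))
     \<le> revenue Rev b2 (Inc b2) + (\<Sum>k\<in>{i}. tx_util (b2!k) (b2!k) (xh Inc Conf b2 k) (ph Inc Conf Pay b2 k))"
  proof (rule scp_inst[OF tfm scp n2 n12 _ KD])
    show "length b12 = length b2" using l2 l12 by simp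
    show "\<forall>k<length b2. k \<notin> {i} \<longrightarrow> b12 ! k = b2 ! k"
    proof (intro allI impI)
      fix k assume "k < length b2" "k \<notin> {i}"
      then show "b12 ! k = b2 ! k" unfolding b12_def b2_def by (cases "k = j") simp_all
    qed
  qed
  have B': "revenue Rev b (Inc b) + tx_util (b!i+1) (b!i) (xh Inc Conf b i) (ph Inc Conf Pay b i)
       + tx_util (b!j+1) (b!j) (xh Inc Conf b j) (ph Inc Conf Pay b j)
     \<le> revenue Rev b12 (Inc b12) + tx_util (b!i+1) (b!i+1) (xh Inc Conf b12 i) (ph Inc Conf Pay b12 i)
       + tx_util (b!j+1) (b!j+1) (xh Inc Conf b12 j) (ph Inc Conf Pay b12 j)"
    using B ij b12i b12j by simp
  have C': "revenue Rev b2 (Inc b2) + tx_util (b!i) (b!i) (xh Inc Conf b2 i) (ph Inc Conf Pay b2 i)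
       + tx_util (b!j) (b!j+1) (xh Inc Conf b2 j) (ph Inc Conf Pay b2 j)
     \<le> revenue Rev b (Inc b) + tx_util (b!i) (b!i) (xh Inc Conf b i) (ph Inc Conf Pay b i)
       + tx_util (b!j) (b!j) (xh Inc Conf b j) (ph Inc Conf Pay b j)"
    using C ij b2i b2j by simp
  have D': "revenue Rev b12 (Inc b12) + tx_util (b!i) (b!i+1) (xh Inc Conf b12 i) (ph Inc Conf Pay b12 i)
     \<le> revenue Rev b2 (Inc b2) + tx_util (b!i) (b!i) (xh Inc Conf b2 i) (ph Inc Conf Pay b2 i)"
    using D b2i b12i by simp
  have A': "tx_util (b!j+1) (b!j) (xh Inc Conf b j) (ph Inc Conf Pay b j)
     \<le> tx_util (b!j+1) (b!j+1) (xh Inc Conf b2 j) (ph Inc Conf Pay b2 j)"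
    using A b2j by simp
  have t1: "\<And>v c p. tx_util v (v+1) c p = tx_util (v+1) (v+1) c p - 1"
    unfolding tx_util_def by simp
  have t2: "\<And>w v p. tx_util w v True p = w - p" unfolding tx_util_def by simp
  have U: "tx_util (b!j+1) (b!j+1) (xh Inc Conf b12 j) (ph Inc Conf Pay b12 j) \<ge> 1"
  proof -
    have e1: "tx_util (b!i+1) (b!i) (xh Inc Conf b i) (ph Inc Conf Pay b i) = b!i+1 - ph Inc Conf Pay b i"
      using xi t2 by simp
    have e2: "tx_util (b!j+1) (b!j) (xh Inc Conf b j) (ph Inc Conf Pay b j) = b!j+1 - ph Inc Conf Pay b j"
      using xj t2 by simp
    have e3: "tx_util (b!i) (b!i) (xh Inc Conf b i) (ph Inc Conf Pay b i) = b!i - ph Inc Conf Pay b i"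
      using xi t2 by simp
    have e4: "tx_util (b!j) (b!j) (xh Inc Conf b j) (ph Inc Conf Pay b j) = b!j - ph Inc Conf Pay b j"
      using xj t2 by simp
    note A'' = A'[unfolded e2] and B'' = B'[unfolded e1 e2] and C'' = C'[unfolded e3 e4 t1]
      and D'' = D'[unfolded t1]
    show ?thesis by (rule lin[OF B'' C'' D'' A'' pj])
  qed
  have "xh Inc Conf b12 j \<and> ph Inc Conf Pay b12 j < b12 ! j"
  proof (cases "xh Inc Conf b12 j")
    case True then show ?thesis using U b12j by (simp add: t2)
  next
    case False then show ?thesis using U unfolding tx_util_def by simp
  qed
  then show ?thesis unfolding b12_def .
qed

theorem mainTheorem20:
  fixes B :: nat
    and Inc :: "real list \<Rightarrow> nat set"
    and Conf :: "real list \<Rightarrow> nat set"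
    and Pay :: "real list \<Rightarrow> nat \<Rightarrow> real"
    and Rev :: "real list \<Rightarrow> real"
  assumes "is_TFM B Inc Conf Pay Rev"
    and "two_user_friendly Inc Conf"
    and "weak_UIC Inc Conf Pay"
    and "weak_SCP 2 B Inc Conf Pay Rev"
  shows "\<exists>b i j. nonneg b \<and> i < length b \<and> j < length b \<and> i \<noteq> j \<and>
           xh Inc Conf b i \<and> xh Inc Conf b j \<and>
           b ! i > ph Inc Conf Pay b i \<and> b ! j > ph Inc Conf Pay b j"
proof -
  obtain b i j where nb: "nonneg b" and i: "i < length b" and j: "j < length b" and ij: "i \<noteq> j"
    and xi: "xh Inc Conf b i" and xj: "xh Inc Conf b j"
    using assms(2) unfolding two_user_friendly_def by blast
  define b12 where "b12 = b[i := b!i+1, j := b!j+1]"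
  have k1: "xh Inc Conf b12 j \<and> ph Inc Conf Pay b12 j < b12 ! j"
    unfolding b12_def by (rule key[OF assms(1,3,4) nb i j ij xi xj])
  have "b[j := b!j+1, i := b!i+1] = b12" unfolding b12_def by (rule list_update_swap[OF ij[symmetric]])
  note eq = this
  have k2: "xh Inc Conf b12 i \<and> ph Inc Conf Pay b12 i < b12 ! i"
    using key[OF assms(1,3,4) nb j i ij[symmetric] xj xi] unfolding eq .
  have "b!i \<ge> 0" "b!j \<ge> 0" using nb i j unfolding nonneg_def by auto
  then have n12: "nonneg b12" unfolding b12_def using nonneg_upd1 nb by simp
  have l12: "length b12 = length b" unfolding b12_def by simp
  show ?thesis
    apply (rule exI[of _ b12], rule exI[of _ i], rule exI[of _ j])
    using k1 k2 n12 i j ij l12 by simp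
qed

end
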